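(* Let $G$ be a group, $H$ an amenable normal subgroup of $G$, and $\rho\colon G\to G/H$ the natural homomorphism. Suppose $U_1,U_2\subseteq G$ are finite subsets such that for every pair of finite subsets $F_1,F_2\subseteq G$ we have $|F_1U_1\cup F_2U_2|\geq|F_1|+|F_2|$. Let $U_i'=\rho(U_i)$. Then for every pair of finite subsets $F_1',F_2'\subseteq G/H$ we have $|F_1'U_1'\cup F_2'U_2'|\geq|F_1'|+|F_2'|$.
   Context: $FU=\{fu: f\in F, u\in U\}$. *)

theory Defs
  imports "HOL-Algebra.Algebra"
begin

text \<open>Amenability of a (discrete) group, via the Folner condition:
  for every finite subset K of the group and every eps > 0 there is a finite
  nonempty subset F with |gF symmetric-difference F| < eps |F| for all g in K.\<close>

definition amenable :: "('a, 'b) monoid_scheme \<Rightarrow> bool" where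
  "amenable G \<longleftrightarrow>
     (\<forall>K (\<epsilon>::real). K \<subseteq> carrier G \<and> finite K \<and> \<epsilon> > 0 \<longrightarrow>
        (\<exists>F. F \<subseteq> carrier G \<and> finite F \<and> F \<noteq> {} \<and>
             (\<forall>g\<in>K. real (card (((g <#\<^bsub>G\<^esub> F) - F) \<union> (F - (g <#\<^bsub>G\<^esub> F))))
                      < \<epsilon> * real (card F))))"

end

theory Submission
  imports Defs
begin

theorem lemma3p4:
  fixes G (structure) and H U1 U2 :: "'a set"
  assumes "group G"
    and "H \<lhd> G"
    and "amenable (G\<lparr>carrier := H\<rparr>)"
    and "U1 \<subseteq> carrier G" and "U2 \<subseteq> carrier G"
    and "finite U1" and "finite U2"
    and "\<forall>F1 F2. F1 \<subseteq> carrier G \<longrightarrow> F2 \<subseteq> carrier G \<longrightarrow> finite F1 \<longrightarrow> finite F2 \<longrightarrow>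
           card ((F1 <#> U1) \<union> (F2 <#> U2)) \<ge> card F1 + card F2"
  shows "\<forall>F1' F2'. F1' \<subseteq> carrier (G Mod H) \<longrightarrow> F2' \<subseteq> carrier (G Mod H) \<longrightarrow>
           finite F1' \<longrightarrow> finite F2' \<longrightarrow>
           card ((F1' <#>\<^bsub>G Mod H\<^esub> ((\<lambda>g. H #> g) ` U1)) \<union>
                 (F2' <#>\<^bsub>G Mod H\<^esub> ((\<lambda>g. H #> g) ` U2)))
             \<ge> card F1' + card F2'"
proof (intro allI impI)
  fix F1' F2'
  assume F1'c: "F1' \<subseteq> carrier (G Mod H)" and F2'c: "F2' \<subseteq> carrier (G Mod H)"
    and fin1: "finite F1'" and fin2: "finite F2'"
  interpret group G by (rule assms(1))
  interpret N: normal H G by (rule assms(2))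
  have Hsub: "subgroup H G" by (rule N.subgroup_axioms)
  have HG: "H \<subseteq> carrier G" by (rule N.subset)
  have hx: "H #> (h \<otimes> x) = H #> x" if "h \<in> H" "x \<in> carrier G" for h x
    using that coset_mult_assoc[OF HG, of h x] N.rcos_const[OF assms(1), of h] HG by auto
  define rep where "rep C = (SOME x. x \<in> carrier G \<and> C = H #> x)" for C
  have rep: "rep C \<in> carrier G \<and> C = H #> rep C" if "C \<in> carrier (G Mod H)" for C
  proof -
    have "\<exists>x. x \<in> carrier G \<and> C = H #> x" using that unfolding carrier_FactGroup by auto
    thus ?thesis unfolding rep_def by (rule someI_ex)
  qed
  have repin: "rep (H #> y) \<otimes> inv y \<in> H" if "y \<in> carrier G" for y
  proof -
    have C: "H #> y \<in> carrier (G Mod H)" using that unfolding carrier_FactGroup by auto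
    have "rep (H #> y) \<in> H #> y" using rep[OF C] rcos_self[OF _ Hsub] by metis
    thus ?thesis using N.rcos_module_imp[OF assms(1) that] by blast
  qed
  define Q where "Q = (F1' <#>\<^bsub>G Mod H\<^esub> ((\<lambda>g. H #> g) ` U1)) \<union>
                 (F2' <#>\<^bsub>G Mod H\<^esub> ((\<lambda>g. H #> g) ` U2))"
  have Qfin: "finite Q" unfolding Q_def set_mult_def using fin1 fin2 assms(6,7) by auto
  define R where "R = (rep ` F1' <#> U1) \<union> (rep ` F2' <#> U2)"
  have Rfin: "finite R" unfolding R_def set_mult_def using fin1 fin2 assms(6,7) by auto
  have RG: "R \<subseteq> carrier G" unfolding R_def set_mult_def using rep F1'c F2'c assms(4,5) by blast
  have RQ: "H #> y \<in> Q" if "y \<in> R" for y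
  proof -
    from that obtain C u i where i: "(C \<in> F1' \<and> u \<in> U1 \<and> i = (1::nat)) \<or> (C \<in> F2' \<and> u \<in> U2 \<and> i = 2)"
      and y: "y = rep C \<otimes> u"
      unfolding R_def set_mult_def by blast
    have Cc: "C \<in> carrier (G Mod H)" using i F1'c F2'c by blast
    have uc: "u \<in> carrier G" using i assms(4,5) by blast
    have "H #> y = (H #> rep C) <#> (H #> u)" using N.rcos_sum[of "rep C" u] rep[OF Cc] uc y by simp
    also have "\<dots> = C <#> (H #> u)" using rep[OF Cc] by simp
    moreover have "C <#> (H #> u) \<in> Q"
      using i unfolding Q_def set_mult_def[of "G Mod H"] mult_FactGroup by blast
    ultimately show ?thesis by simp
  qed
  define K where "K = (\<lambda>y. rep (H #> y) \<otimes> inv y) ` R"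
  have Kfin: "finite K" unfolding K_def using Rfin by simp
  have KH: "K \<subseteq> H" unfolding K_def using repin RG by blast
  define n where "n = card Q"
  define eps :: real where "eps = 1 / (real n * real (card K) + 1)"
  have epspos: "eps > 0" unfolding eps_def by (simp add: add_nonneg_pos)
  have lc: "(g <#\<^bsub>G\<lparr>carrier := H\<rparr>\<^esub> A) = g <# A" for g A by (simp add: l_coset_def)
  obtain F where F: "F \<subseteq> H" "finite F" "F \<noteq> {}"
    and Ffol: "\<forall>g\<in>K. real (card (((g <# F) - F) \<union> (F - (g <# F)))) < eps * real (card F)"
  proof -
    have "\<forall>K (\<epsilon>::real). K \<subseteq> H \<and> finite K \<and> \<epsilon> > 0 \<longrightarrow>
        (\<exists>F. F \<subseteq> H \<and> finite F \<and> F \<noteq> {} \<and>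
             (\<forall>g\<in>K. real (card (((g <# F) - F) \<union> (F - (g <# F))))
                      < \<epsilon> * real (card F)))"
      using assms(3) unfolding amenable_def lc by simp
    hence "\<exists>F. F \<subseteq> H \<and> finite F \<and> F \<noteq> {} \<and>
             (\<forall>g\<in>K. real (card (((g <# F) - F) \<union> (F - (g <# F))))
                      < eps * real (card F))" using KH Kfin epspos by blast
    thus ?thesis using that by blast
  qed
  define F1 where "F1 = (\<lambda>(f,C). inv f \<otimes> rep C) ` (F \<times> F1')"
  define F2 where "F2 = (\<lambda>(f,C). inv f \<otimes> rep C) ` (F \<times> F2')"
  have FG: "f \<in> carrier G" if "f \<in> F" for f using that F(1) HG by blast
  have cardF: "card ((\<lambda>(f,C). inv f \<otimes> rep C) ` (F \<times> A)) = card F * card A"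
    if "A \<subseteq> carrier (G Mod H)" for A
  proof -
    have "inj_on (\<lambda>(f,C). inv f \<otimes> rep C) (F \<times> A)"
    proof (rule inj_onI, clarify)
      fix f C f' C'
      assume a: "f \<in> F" "C \<in> A" "f' \<in> F" "C' \<in> A" "inv f \<otimes> rep C = inv f' \<otimes> rep C'"
      have r1: "rep C \<in> carrier G \<and> C = H #> rep C" using rep a(2) that by blast
      have r2: "rep C' \<in> carrier G \<and> C' = H #> rep C'" using rep a(4) that by blast
      have "H #> (inv f \<otimes> rep C) = C" using hx[of "inv f" "rep C"] r1 a(1) F(1)
        by (metis N.m_inv_closed subsetD)
      moreover have "H #> (inv f' \<otimes> rep C') = C'" using hx[of "inv f'" "rep C'"] r2 a(3) F(1)
        by (metis N.m_inv_closed subsetD)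
      ultimately have CC: "C = C'" using a(5) by simp
      hence "inv f = inv f'" using a(5) r1 FG[OF a(1)] FG[OF a(3)]
        by (metis inv_closed r_cancel)
      hence "f = f'" using FG[OF a(1)] FG[OF a(3)] by (metis inv_inv)
      thus "f = f' \<and> C = C'" using CC by simp
    qed
    thus ?thesis by (simp add: card_image card_cartesian_product)
  qed
  have F1c: "card F1 = card F * card F1'" unfolding F1_def using cardF F1'c by blast
  have F2c: "card F2 = card F * card F2'" unfolding F2_def using cardF F2'c by blast
  have FiG: "(\<lambda>(f,C). inv f \<otimes> rep C) ` (F \<times> A) \<subseteq> carrier G"
    if "A \<subseteq> carrier (G Mod H)" for A using that rep FG by auto
  have F1fin: "finite F1" unfolding F1_def using F(2) fin1 by simp
  have F2fin: "finite F2" unfolding F2_def using F(2) fin2 by simp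
  define T where "T = (F1 <#> U1) \<union> (F2 <#> U2)"
  have Tbig: "card F1 + card F2 \<le> card T" unfolding T_def
    using assms(8)[rule_format, OF FiG[OF F1'c] FiG[OF F2'c]] F1fin F2fin unfolding F1_def F2_def by simp
  have Tdec: "\<exists>f\<in>F. \<exists>y\<in>R. x = inv f \<otimes> y"
    if "x \<in> ((\<lambda>(f,C). inv f \<otimes> rep C) ` (F \<times> A)) <#> U" "A \<subseteq> carrier (G Mod H)" "U \<subseteq> carrier G"
       "rep ` A <#> U \<subseteq> R" for x A U
  proof -
    from that(1) obtain a u where a: "a \<in> (\<lambda>(f,C). inv f \<otimes> rep C) ` (F \<times> A)" and u: "u \<in> U"
      and x: "x = a \<otimes> u" unfolding set_mult_def by blast
    from a obtain f C where f: "f \<in> F" and C: "C \<in> A" and ae: "a = inv f \<otimes> rep C" by auto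
    have Cc: "C \<in> carrier (G Mod H)" using C that(2) by blast
    have uc: "u \<in> carrier G" using u that(3) by blast
    have "x = inv f \<otimes> (rep C \<otimes> u)" using x ae m_assoc rep[OF Cc] uc FG[OF f] by simp
    moreover have "rep C \<otimes> u \<in> rep ` A <#> U" using C u unfolding set_mult_def by blast
    ultimately show ?thesis using f that(4) by blast
  qed
  have Tdecomp: "\<exists>f\<in>F. \<exists>y\<in>R. x = inv f \<otimes> y" if "x \<in> T" for x
  proof -
    have "x \<in> F1 <#> U1 \<or> x \<in> F2 <#> U2" using that unfolding T_def by blast
    thus ?thesis
    proof
      assume "x \<in> F1 <#> U1"
      thus ?thesis using Tdec[of x F1' U1] F1'c assms(4) unfolding F1_def R_def by blast
    next
      assume "x \<in> F2 <#> U2"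
      thus ?thesis using Tdec[of x F2' U2] F2'c assms(5) unfolding F2_def R_def by blast
    qed
  qed
  define W where "W = (\<Union>k\<in>K. k <# F)"
  define phi where "phi x = (H #> x, rep (H #> x) \<otimes> inv x)" for x
  have TG: "T \<subseteq> carrier G" using Tdecomp RG FG by blast
  have phiT: "phi ` T \<subseteq> Q \<times> W"
  proof
    fix z assume "z \<in> phi ` T"
    then obtain x where xT: "x \<in> T" and z: "z = phi x" by blast
    obtain f y where f: "f \<in> F" and y: "y \<in> R" and xe: "x = inv f \<otimes> y" using Tdecomp[OF xT] by blast
    have yc: "y \<in> carrier G" using y RG by blast
    have fc: "f \<in> carrier G" using FG f by blast
    have Hx: "H #> x = H #> y" using hx[of "inv f" y] xe yc f F(1) by (metis N.m_inv_closed subsetD)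
    have repc: "rep (H #> y) \<in> carrier G" using rep[of "H #> y"] yc unfolding carrier_FactGroup by blast
    have "rep (H #> x) \<otimes> inv x = (rep (H #> y) \<otimes> inv y) \<otimes> f"
      using Hx xe yc fc repc by (simp add: inv_mult_group m_assoc)
    moreover have "rep (H #> y) \<otimes> inv y \<in> K" unfolding K_def using y by blast
    ultimately have "rep (H #> x) \<otimes> inv x \<in> W" unfolding W_def l_coset_def using f by blast
    thus "z \<in> Q \<times> W" using z RQ[OF y] Hx unfolding phi_def by simp
  qed
  have phiinj: "inj_on phi T"
  proof (rule inj_onI)
    fix x x' assume a: "x \<in> T" "x' \<in> T" "phi x = phi x'"
    have c: "x \<in> carrier G" "x' \<in> carrier G" using a TG by blast+
    have Hx: "H #> x = H #> x'" and e: "rep (H #> x) \<otimes> inv x = rep (H #> x') \<otimes> inv x'"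
      using a(3) unfolding phi_def prod.inject by blast+
    have repc: "rep (H #> x) \<in> carrier G" using rep[of "H #> x"] c unfolding carrier_FactGroup by blast
    have "inv x = inv x'" using e Hx repc c by (metis inv_closed l_cancel)
    thus "x = x'" using c by (metis inv_inv)
  qed
  have Wfin: "finite W" unfolding W_def l_coset_def using Kfin F(2) by simp
  have Tfin: "finite T" unfolding T_def set_mult_def using F1fin F2fin assms(6,7) by simp
  have "card T = card (phi ` T)" using phiinj by (simp add: card_image)
  also have "\<dots> \<le> card (Q \<times> W)" using phiT Qfin Wfin by (intro card_mono) auto
  also have "\<dots> = n * card W" unfolding n_def by (simp add: card_cartesian_product)
  finally have TW: "card T \<le> n * card W" .
  have lcfin: "finite (k <# F)" for k unfolding l_coset_def using F(2) by simp
  have "W \<subseteq> F \<union> (\<Union>k\<in>K. (k <# F) - F)" unfolding W_def by blast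
  hence "card W \<le> card (F \<union> (\<Union>k\<in>K. (k <# F) - F))"
    using F(2) Kfin lcfin by (intro card_mono) auto
  also have "\<dots> \<le> card F + card (\<Union>k\<in>K. (k <# F) - F)" by (rule card_Un_le)
  also have "\<dots> \<le> card F + (\<Sum>k\<in>K. card ((k <# F) - F))" using card_UN_le[OF Kfin, of "\<lambda>k. (k <# F) - F"] by linarith
  finally have Wb: "real (card W) \<le> real (card F) + (\<Sum>k\<in>K. real (card ((k <# F) - F)))"
    by (metis of_nat_le_iff of_nat_add of_nat_sum)
  have "(\<Sum>k\<in>K. real (card ((k <# F) - F))) \<le> (\<Sum>k\<in>K. eps * real (card F))"
  proof (rule sum_mono)
    fix k assume k: "k \<in> K"
    have "card ((k <# F) - F) \<le> card (((k <# F) - F) \<union> (F - (k <# F)))"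
      using lcfin F(2) by (intro card_mono) auto
    thus "real (card ((k <# F) - F)) \<le> eps * real (card F)" using Ffol k by force
  qed
  hence Wb2: "real (card W) \<le> real (card F) * (1 + real (card K) * eps)"
    using Wb by (simp add: algebra_simps)
  define a where "a = real (card F)"
  have apos: "a > 0" unfolding a_def using F(2,3) by (simp add: card_gt_0_iff)
  have "a * real (card F1' + card F2') \<le> real n * (a * (1 + real (card K) * eps))"
  proof -
    have "card F * (card F1' + card F2') \<le> n * card W"
      using Tbig TW F1c F2c by (simp add: algebra_simps)
    hence "a * real (card F1' + card F2') \<le> real n * real (card W)"
      unfolding a_def by (metis of_nat_le_iff of_nat_mult)
    also have "\<dots> \<le> real n * (a * (1 + real (card K) * eps))"
      using Wb2 unfolding a_def by (intro mult_left_mono) auto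
    finally show ?thesis .
  qed
  hence s: "real (card F1' + card F2') \<le> real n * (1 + real (card K) * eps)"
  proof -
    have "a * real (card F1' + card F2') \<le> a * (real n * (1 + real (card K) * eps))"
      using \<open>a * real (card F1' + card F2') \<le> real n * (a * (1 + real (card K) * eps))\<close>
      by (simp add: algebra_simps)
    thus ?thesis using apos mult_le_cancel_left_pos by blast
  qed
  have "real n * real (card K) * eps < 1"
  proof -
    have p: "0 < real n * real (card K) + 1" by (simp add: add_nonneg_pos)
    have "real n * real (card K) * eps = real n * real (card K) / (real n * real (card K) + 1)"
      unfolding eps_def by simp
    also have "\<dots> < 1" using p by (simp add: divide_less_eq)
    finally show ?thesis .
  qed
  hence "real (card F1' + card F2') < real n + 1" using s by (simp add: algebra_simps)
  hence "card F1' + card F2' \<le> n" by linarith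
  thus "card F1' + card F2' \<le> card Q" unfolding n_def .
qed

end
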